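(* Let $\mathcal{S}=\langle\mathcal{L},\vdash\rangle$ be a Hilbert-style logic, with left variable inclusion companion $\mathcal{S}^l=\langle\mathcal{L},\vdash^l\rangle$ and restricted rules companion $\mathcal{S}^{re}=\langle\mathcal{L},\vdash^{re}\rangle$. Then $\vdash^l\,=\,\vdash^{re}$ if and only if $(\vdash^{re})^l\,=\,\vdash^l$; that is, $\vdash^l\,=\,\vdash^{re}$ holds iff for all $\Gamma\cup\{\alpha\}\subseteq\mathcal{L}$: $\Gamma\vdash^l\alpha$ iff there exists $\Delta\subseteq\Gamma$ such that $\mathrm{var}(\Delta)\subseteq\mathrm{var}(\alpha)$ and $\Delta\vdash^{re}\alpha$.
   Context: A logic is a pair $\langle\mathcal{L},\vdash\rangle$ where $\mathcal{L}$ is the formula algebra over a set of variables $V$ of some finite signature, and $\vdash\subseteq\mathcal{P}(\mathcal{L})\times\mathcal{L}$ is an arbitrary relation (written $\Gamma\vdash\alpha$). For $\alpha\in\mathcal{L}$, $\mathrm{var}(\alpha)$ is the set of variables occurring in $\alpha$, and $\mathrm{var}(\Delta)=\bigcup_{\alpha\in\Delta}\mathrm{var}(\alpha)$. A Hilbert-style logic is one given by a set of axioms $A\subseteq\mathcal{L}$ and a set of rules of inference $R\subseteq\mathcal{P}(\mathcal{L})\times\mathcal{L}$ (a rule $(\Gamma,\alpha)$ is written $\frac{\Gamma}{\alpha}$): $\Sigma\vdash\alpha$ iff there is a finite sequence $\alpha_1,\ldots,\alpha_n=\alpha$ such that each $\alpha_i$ is in $A$, or in $\Sigma$, or there is a rule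 $(\Delta,\alpha_i)\in R$ with $\Delta\subseteq\{\alpha_1,\ldots,\alpha_{i-1}\}$. For any logic $\mathcal{S}=\langle\mathcal{L},\vdash\rangle$, its left variable inclusion companion $\langle\mathcal{L},\vdash^l\rangle$ is defined by: $\Gamma\vdash^l\alpha$ iff there is $\Delta\subseteq\Gamma$ with $\mathrm{var}(\Delta)\subseteq\mathrm{var}(\alpha)$ and $\Delta\vdash\alpha$. For a Hilbert-style logic with axioms $A$ and rules $R$, its restricted rules companion $\langle\mathcal{L},\vdash^{re}\rangle$ is the Hilbert-style logic with axioms $A$ and rules $\{(\Gamma,\alpha)\in R\mid \mathrm{var}(\Gamma)\subseteq\mathrm{var}(\alpha)\}$. Here $(\vdash^{re})^l$ denotes the left variable inclusion companion of $\langle\mathcal{L},\vdash^{re}\rangle$. *)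

theory Defs
  imports Main
begin

datatype ('v, 'f) fm = Var 'v | App 'f "('v, 'f) fm list"

fun wf_fm :: "'f set \<Rightarrow> ('f \<Rightarrow> nat) \<Rightarrow> ('v, 'f) fm \<Rightarrow> bool" where
  "wf_fm F ar (Var x) = True"
| "wf_fm F ar (App f ts) = (f \<in> F \<and> length ts = ar f \<and> (\<forall>t\<in>set ts. wf_fm F ar t))"

definition formulas :: "'f set \<Rightarrow> ('f \<Rightarrow> nat) \<Rightarrow> ('v, 'f) fm set" where
  "formulas F ar = {\<phi>. wf_fm F ar \<phi>}"

fun var :: "('v, 'f) fm \<Rightarrow> 'v set" where
  "var (Var x) = {x}"
| "var (App f ts) = (\<Union>t\<in>set ts. var t)"

definition vars :: "('v, 'f) fm set \<Rightarrow> 'v set" where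
  "vars \<Delta> = (\<Union>\<alpha>\<in>\<Delta>. var \<alpha>)"

definition hilbert ::
  "'a set \<Rightarrow> ('a set \<times> 'a) set \<Rightarrow> 'a set \<Rightarrow> 'a \<Rightarrow> bool" where
  "hilbert A R \<Sigma> \<alpha> \<longleftrightarrow>
     (\<exists>xs. xs \<noteq> [] \<and> last xs = \<alpha> \<and>
        (\<forall>i < length xs. xs ! i \<in> A \<or> xs ! i \<in> \<Sigma> \<or>
           (\<exists>\<Delta>. (\<Delta>, xs ! i) \<in> R \<and> \<Delta> \<subseteq> set (take i xs))))"

definition lvi ::
  "(('v, 'f) fm set \<Rightarrow> ('v, 'f) fm \<Rightarrow> bool) \<Rightarrow> ('v, 'f) fm set \<Rightarrow> ('v, 'f) fm \<Rightarrow> bool" where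
  "lvi cons \<Gamma> \<alpha> \<longleftrightarrow> (\<exists>\<Delta>\<subseteq>\<Gamma>. vars \<Delta> \<subseteq> var \<alpha> \<and> cons \<Delta> \<alpha>)"

definition restrict_rules :: "(('v, 'f) fm set \<times> ('v, 'f) fm) set \<Rightarrow> (('v, 'f) fm set \<times> ('v, 'f) fm) set" where
  "restrict_rules R = {(\<Gamma>, \<alpha>) \<in> R. vars \<Gamma> \<subseteq> var \<alpha>}"

end

theory Submission
  imports Defs
begin

definition dv where
  "dv A R S xs \<longleftrightarrow> (\<forall>i < length xs. xs ! i \<in> A \<or> xs ! i \<in> S \<or>
           (\<exists>D. (D, xs ! i) \<in> R \<and> D \<subseteq> set (take i xs)))"

lemma hilbert_dv: "hilbert A R S a \<longleftrightarrow> (\<exists>xs. xs \<noteq> [] \<and> last xs = a \<and> dv A R S xs)"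
  by (simp add: hilbert_def dv_def)

lemma dv_take: "dv A R S xs \<Longrightarrow> dv A R S (take n xs)"
  unfolding dv_def by (auto simp: min_def)

lemma dv_mem:
  assumes "dv A R S xs" "a \<in> set xs" shows "hilbert A R S a"
proof -
  obtain k where k: "k < length xs" "xs ! k = a" using assms(2) by (auto simp: in_set_conv_nth)
  have "take (Suc k) xs = take k xs @ [a]" using k by (simp add: take_Suc_conv_app_nth)
  then show ?thesis unfolding hilbert_dv
    by (metis assms(1) dv_take last_snoc snoc_eq_iff_butlast)
qed

lemma dv_append: "dv A R S xs \<Longrightarrow> dv A R S ys \<Longrightarrow> dv A R S (xs @ ys)"
  unfolding dv_def
proof (intro allI impI)
  fix i assume h1: "\<forall>i<length xs. xs ! i \<in> A \<or> xs ! i \<in> S \<or> (\<exists>D. (D, xs ! i) \<in> R \<and> D \<subseteq> set (take i xs))"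
    and h2: "\<forall>i<length ys. ys ! i \<in> A \<or> ys ! i \<in> S \<or> (\<exists>D. (D, ys ! i) \<in> R \<and> D \<subseteq> set (take i ys))"
    and i: "i < length (xs @ ys)"
  show "(xs @ ys) ! i \<in> A \<or> (xs @ ys) ! i \<in> S \<or> (\<exists>D. (D, (xs @ ys) ! i) \<in> R \<and> D \<subseteq> set (take i (xs @ ys)))"
  proof (cases "i < length xs")
    case True then show ?thesis using h1 by (auto simp: nth_append)
  next
    case False
    then have "i - length xs < length ys" using i by auto
    then have "ys ! (i - length xs) \<in> A \<or> ys ! (i - length xs) \<in> S \<or> (\<exists>D. (D, ys ! (i - length xs)) \<in> R \<and> D \<subseteq> set (take (i - length xs) ys))"
      using h2 by blast
    then show ?thesis using False by (auto simp: nth_append take_append)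
  qed
qed

lemma dv_finite:
  assumes "finite D" shows "(\<forall>d\<in>D. hilbert A R S d) \<Longrightarrow> \<exists>xs. dv A R S xs \<and> D \<subseteq> set xs"
  using assms
proof (induction D rule: finite_induct)
  case empty have "dv A R S []" by (simp add: dv_def)
  then show ?case by blast
next
  case (insert x F)
  then obtain xs where xs: "dv A R S xs" "F \<subseteq> set xs" by auto
  from insert obtain ys where ys: "ys \<noteq> []" "last ys = x" "dv A R S ys" by (auto simp: hilbert_dv)
  have "x \<in> set ys" using ys by auto
  then show ?case using xs ys dv_append by (intro exI[of _ "xs @ ys"]) auto
qed

lemma dv_snoc: "dv A R S xs \<Longrightarrow> (D, g) \<in> R \<Longrightarrow> D \<subseteq> set xs \<Longrightarrow> dv A R S (xs @ [g])"
  unfolding dv_def by (auto simp: nth_append less_Suc_eq)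

lemma hilbert_mono: "S \<subseteq> S' \<Longrightarrow> R \<subseteq> R' \<Longrightarrow> hilbert A R S a \<Longrightarrow> hilbert A R' S' a"
  unfolding hilbert_def by (metis subsetD)

lemma restr_sub: "restrict_rules R \<subseteq> R" by (auto simp: restrict_rules_def)

lemma key:
  assumes "hilbert A (restrict_rules R) G a"
  shows "hilbert A (restrict_rules R) {b\<in>G. var b \<subseteq> var a} a"
proof -
  let ?RR = "restrict_rules R"
  obtain xs where xs: "xs \<noteq> []" "last xs = a" "dv A ?RR G xs" using assms by (auto simp: hilbert_dv)
  have "\<forall>i<length xs. hilbert A ?RR {b\<in>G. var b \<subseteq> var (xs ! i)} (xs ! i)" (is "\<forall>i. ?P i")
  proof (intro allI)
    fix i show "?P i"
    proof (induction i rule: less_induct)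
      case (less i)
      show ?case
      proof
        assume i: "i < length xs"
        let ?S = "{b\<in>G. var b \<subseteq> var (xs ! i)}"
        have c: "xs ! i \<in> A \<or> xs ! i \<in> G \<or> (\<exists>D. (D, xs ! i) \<in> ?RR \<and> D \<subseteq> set (take i xs))"
          using xs(3) i by (auto simp: dv_def)
        show "hilbert A ?RR ?S (xs ! i)"
        proof (cases "xs ! i \<in> A \<or> xs ! i \<in> G")
          case True
          then have "dv A ?RR ?S [xs ! i]" by (auto simp: dv_def)
          then show ?thesis unfolding hilbert_dv by (intro exI[of _ "[xs!i]"]) auto
        next
          case False
          then obtain D where D: "(D, xs ! i) \<in> ?RR" "D \<subseteq> set (take i xs)" using c by auto
          have vD: "vars D \<subseteq> var (xs ! i)" using D(1) by (auto simp: restrict_rules_def)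
          have all: "\<forall>d\<in>D. hilbert A ?RR ?S d"
          proof
            fix d assume d: "d \<in> D"
            then have "d \<in> set (take i xs)" using D(2) by blast
            then obtain j where "j < length (take i xs)" "take i xs ! j = d"
              by (auto simp: in_set_conv_nth)
            then have j: "j < i" "xs ! j = d" by auto
            have j2: "j < length xs" using j i by simp
            have h: "hilbert A ?RR {b\<in>G. var b \<subseteq> var d} d"
              using less.IH[OF j(1)] j2 j(2) by simp
            have "var d \<subseteq> var (xs ! i)" using vD d by (auto simp: vars_def)
            then have sub: "{b\<in>G. var b \<subseteq> var d} \<subseteq> ?S" by auto
            show "hilbert A ?RR ?S d"
              by (rule hilbert_mono[OF sub order_refl h])
          qed
          have fD: "finite D" using D(2) finite_subset by blast
          obtain ys where ys: "dv A ?RR ?S ys" "D \<subseteq> set ys" using dv_finite[OF fD all] by blast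
          have "dv A ?RR ?S (ys @ [xs ! i])" using dv_snoc[OF ys(1) D(1) ys(2)] .
          then show ?thesis unfolding hilbert_dv by (intro exI[of _ "ys @ [xs!i]"]) auto
        qed
      qed
    qed
  qed
  moreover have "length xs - 1 < length xs" using xs(1) by simp
  ultimately have "hilbert A ?RR {b\<in>G. var b \<subseteq> var (xs ! (length xs - 1))} (xs ! (length xs - 1))" by blast
  moreover have "xs ! (length xs - 1) = a" using xs(1,2) by (simp add: last_conv_nth)
  ultimately show ?thesis by simp
qed

theorem theorem2p7:
  fixes F :: "'f set" and ar :: "'f \<Rightarrow> nat"
    and A :: "('v, 'f) fm set" and R :: "(('v, 'f) fm set \<times> ('v, 'f) fm) set"
  assumes "finite F"
    and "A \<subseteq> formulas F ar"
    and "\<forall>(\<Gamma>, \<alpha>)\<in>R. \<Gamma> \<subseteq> formulas F ar \<and> \<alpha> \<in> formulas F ar"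
  shows "(\<forall>\<Gamma> \<alpha>. \<Gamma> \<subseteq> formulas F ar \<longrightarrow> \<alpha> \<in> formulas F ar \<longrightarrow>
            (lvi (hilbert A R) \<Gamma> \<alpha> \<longleftrightarrow> hilbert A (restrict_rules R) \<Gamma> \<alpha>))
     \<longleftrightarrow>
         (\<forall>\<Gamma> \<alpha>. \<Gamma> \<subseteq> formulas F ar \<longrightarrow> \<alpha> \<in> formulas F ar \<longrightarrow>
            (lvi (hilbert A R) \<Gamma> \<alpha> \<longleftrightarrow>
               (\<exists>\<Delta>\<subseteq>\<Gamma>. vars \<Delta> \<subseteq> var \<alpha> \<and> hilbert A (restrict_rules R) \<Delta> \<alpha>)))"
proof
  assume H: "\<forall>\<Gamma> \<alpha>. \<Gamma> \<subseteq> formulas F ar \<longrightarrow> \<alpha> \<in> formulas F ar \<longrightarrow>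
            (lvi (hilbert A R) \<Gamma> \<alpha> \<longleftrightarrow> hilbert A (restrict_rules R) \<Gamma> \<alpha>)"
  show "\<forall>\<Gamma> \<alpha>. \<Gamma> \<subseteq> formulas F ar \<longrightarrow> \<alpha> \<in> formulas F ar \<longrightarrow>
            (lvi (hilbert A R) \<Gamma> \<alpha> \<longleftrightarrow>
               (\<exists>\<Delta>\<subseteq>\<Gamma>. vars \<Delta> \<subseteq> var \<alpha> \<and> hilbert A (restrict_rules R) \<Delta> \<alpha>))"
  proof (intro allI impI iffI)
    fix G a assume G: "G \<subseteq> formulas F ar" and a: "a \<in> formulas F ar" and l: "lvi (hilbert A R) G a"
    then obtain D where D: "D \<subseteq> G" "vars D \<subseteq> var a" "hilbert A R D a" by (auto simp: lvi_def)
    have "lvi (hilbert A R) D a" using D by (auto simp: lvi_def)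
    moreover have DF: "D \<subseteq> formulas F ar" using D(1) G by blast
    ultimately have "hilbert A (restrict_rules R) D a" using H[rule_format, OF DF a] by simp
    then show "\<exists>D\<subseteq>G. vars D \<subseteq> var a \<and> hilbert A (restrict_rules R) D a" using D by blast
  next
    fix G a assume G: "G \<subseteq> formulas F ar" and a: "a \<in> formulas F ar"
      and "\<exists>D\<subseteq>G. vars D \<subseteq> var a \<and> hilbert A (restrict_rules R) D a"
    then obtain D where D: "D \<subseteq> G" "vars D \<subseteq> var a" "hilbert A (restrict_rules R) D a" by blast
    moreover have DF: "D \<subseteq> formulas F ar" using D(1) G by blast
    ultimately have "lvi (hilbert A R) D a" using H[rule_format, OF DF a] by simp
    then show "lvi (hilbert A R) G a" using D by (auto simp: lvi_def)
  qed
next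
  assume H: "\<forall>\<Gamma> \<alpha>. \<Gamma> \<subseteq> formulas F ar \<longrightarrow> \<alpha> \<in> formulas F ar \<longrightarrow>
            (lvi (hilbert A R) \<Gamma> \<alpha> \<longleftrightarrow>
               (\<exists>\<Delta>\<subseteq>\<Gamma>. vars \<Delta> \<subseteq> var \<alpha> \<and> hilbert A (restrict_rules R) \<Delta> \<alpha>))"
  show "\<forall>\<Gamma> \<alpha>. \<Gamma> \<subseteq> formulas F ar \<longrightarrow> \<alpha> \<in> formulas F ar \<longrightarrow>
            (lvi (hilbert A R) \<Gamma> \<alpha> \<longleftrightarrow> hilbert A (restrict_rules R) \<Gamma> \<alpha>)"
  proof (intro allI impI iffI)
    fix G a assume G: "G \<subseteq> formulas F ar" and a: "a \<in> formulas F ar" and l: "lvi (hilbert A R) G a"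
    have "\<exists>D\<subseteq>G. vars D \<subseteq> var a \<and> hilbert A (restrict_rules R) D a" using H[rule_format, OF G a] l by blast
    then obtain D where D1: "D \<subseteq> G" and D2: "hilbert A (restrict_rules R) D a" by blast
    show "hilbert A (restrict_rules R) G a" by (rule hilbert_mono[OF D1 order_refl D2])
  next
    fix G a assume "hilbert A (restrict_rules R) G a"
    then have h: "hilbert A (restrict_rules R) {b\<in>G. var b \<subseteq> var a} a" by (rule key)
    have h1: "hilbert A R {b\<in>G. var b \<subseteq> var a} a" by (rule hilbert_mono[OF order_refl restr_sub h])
    have h2: "vars {b\<in>G. var b \<subseteq> var a} \<subseteq> var a" by (auto simp: vars_def)
    have h3: "{b\<in>G. var b \<subseteq> var a} \<subseteq> G" by auto
    show "lvi (hilbert A R) G a" unfolding lvi_def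
      by (intro exI[of _ "{b\<in>G. var b \<subseteq> var a}"] conjI h1 h2 h3)
  qed
qed

end
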